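(* Let $G$ be a residually finite group and let $A$ be a finite set. Suppose that $X \subset A^G$ is a strongly irreducible subshift of finite type containing a periodic configuration. Then $X$ is surjunctive and its automorphism group $\mathrm{Aut}(X)$ is residually finite. If in addition $G$ is countable, then $X$ admits a $G$-invariant Borel probability measure with full support.
   Context: $A^G=\{x\colon G\to A\}$ carries the prodiscrete topology and the $G$-shift action $(gx)(h)=x(g^{-1}h)$. A subshift is a closed $G$-invariant subset of $A^G$. A configuration is periodic if its $G$-orbit is finite. A subshift $X$ is of finite type if there are a finite $\Omega\subset G$ and $\mathcal P\subset A^\Omega$ with $X=\{x\in A^G:(gx)|_\Omega\in\mathcal P\ \forall g\in G\}$. $X$ is strongly irreducible if there is a finite $\Delta\subset G$ such that for all finite $\Omega_1,\Omega_2\subset G$ with $\Omega_1\Delta^{-1}\cap\Omega_2=\varnothing$ and all $x_1,x_2\in X$ there is $x\in X$ with $x|_{\Omega_1}=x_1|_{\Omega_1}$, $x|_{\Omega_2}=x_2|_{\Omega_2}$. A cellular automaton on $X$ is a continuous $G$-equivariant map $X\to X$; $X$ is surjunctive if every injective cellular automaton $X\to X$ is surjective; $\mathrm{Aut}(X)$ is the group of bijective cellular automata $X\to X$ under composition. A group is residually finite if the intersection of its finite-index subgroups is trivial. *)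

theory Defs
  imports "HOL-Probability.Probability" "HOL-Algebra.Coset"
begin

definition fullshift :: "('g, 'b) monoid_scheme \<Rightarrow> 'a set \<Rightarrow> ('g \<Rightarrow> 'a) set" where
  "fullshift G A = (carrier G \<rightarrow>\<^sub>E A)"

definition prodiscrete :: "('g, 'b) monoid_scheme \<Rightarrow> 'a set \<Rightarrow> ('g \<Rightarrow> 'a) topology" where
  "prodiscrete G A = product_topology (\<lambda>_. discrete_topology A) (carrier G)"

definition shift :: "('g, 'b) monoid_scheme \<Rightarrow> 'g \<Rightarrow> ('g \<Rightarrow> 'a) \<Rightarrow> ('g \<Rightarrow> 'a)" where
  "shift G g x = (\<lambda>h\<in>carrier G. x (inv\<^bsub>G\<^esub> g \<otimes>\<^bsub>G\<^esub> h))"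

definition subshift :: "('g, 'b) monoid_scheme \<Rightarrow> 'a set \<Rightarrow> ('g \<Rightarrow> 'a) set \<Rightarrow> bool" where
  "subshift G A X \<longleftrightarrow> X \<subseteq> fullshift G A \<and> closedin (prodiscrete G A) X
     \<and> (\<forall>g\<in>carrier G. \<forall>x\<in>X. shift G g x \<in> X)"

definition periodic :: "('g, 'b) monoid_scheme \<Rightarrow> ('g \<Rightarrow> 'a) \<Rightarrow> bool" where
  "periodic G x \<longleftrightarrow> finite ((\<lambda>g. shift G g x) ` carrier G)"

definition finite_type :: "('g, 'b) monoid_scheme \<Rightarrow> 'a set \<Rightarrow> ('g \<Rightarrow> 'a) set \<Rightarrow> bool" where
  "finite_type G A X \<longleftrightarrow> (\<exists>\<Omega> P. finite \<Omega> \<and> \<Omega> \<subseteq> carrier G \<and> P \<subseteq> (\<Omega> \<rightarrow>\<^sub>E A) \<and>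
      X = {x \<in> fullshift G A. \<forall>g\<in>carrier G. restrict (shift G g x) \<Omega> \<in> P})"

definition strongly_irreducible :: "('g, 'b) monoid_scheme \<Rightarrow> ('g \<Rightarrow> 'a) set \<Rightarrow> bool" where
  "strongly_irreducible G X \<longleftrightarrow> (\<exists>\<Delta>. finite \<Delta> \<and> \<Delta> \<subseteq> carrier G \<and>
     (\<forall>\<Omega>1 \<Omega>2. finite \<Omega>1 \<and> \<Omega>1 \<subseteq> carrier G \<and> finite \<Omega>2 \<and> \<Omega>2 \<subseteq> carrier G \<and>
        {a \<otimes>\<^bsub>G\<^esub> inv\<^bsub>G\<^esub> d | a d. a \<in> \<Omega>1 \<and> d \<in> \<Delta>} \<inter> \<Omega>2 = {} \<longrightarrow>
        (\<forall>x1\<in>X. \<forall>x2\<in>X. \<exists>x\<in>X. (\<forall>h\<in>\<Omega>1. x h = x1 h) \<and> (\<forall>h\<in>\<Omega>2. x h = x2 h))))"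

definition cellular_automaton ::
  "('g, 'b) monoid_scheme \<Rightarrow> 'a set \<Rightarrow> ('g \<Rightarrow> 'a) set \<Rightarrow> (('g \<Rightarrow> 'a) \<Rightarrow> ('g \<Rightarrow> 'a)) \<Rightarrow> bool" where
  "cellular_automaton G A X \<tau> \<longleftrightarrow>
     continuous_map (subtopology (prodiscrete G A) X) (subtopology (prodiscrete G A) X) \<tau>
     \<and> (\<forall>g\<in>carrier G. \<forall>x\<in>X. \<tau> (shift G g x) = shift G g (\<tau> x))"

definition surjunctive :: "('g, 'b) monoid_scheme \<Rightarrow> 'a set \<Rightarrow> ('g \<Rightarrow> 'a) set \<Rightarrow> bool" where
  "surjunctive G A X \<longleftrightarrow>
     (\<forall>\<tau>. cellular_automaton G A X \<tau> \<and> inj_on \<tau> X \<longrightarrow> \<tau> ` X = X)"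

definition Aut :: "('g, 'b) monoid_scheme \<Rightarrow> 'a set \<Rightarrow> ('g \<Rightarrow> 'a) set \<Rightarrow>
    (('g \<Rightarrow> 'a) \<Rightarrow> ('g \<Rightarrow> 'a)) monoid" where
  "Aut G A X = \<lparr> carrier = {\<tau> \<in> extensional X. cellular_automaton G A X \<tau> \<and> bij_betw \<tau> X X},
                mult = (\<lambda>\<sigma> \<tau>. restrict (\<sigma> \<circ> \<tau>) X),
                one = restrict id X \<rparr>"

definition residually_finite :: "('g, 'b) monoid_scheme \<Rightarrow> bool" where
  "residually_finite H \<longleftrightarrow>
     \<Inter>{K. subgroup K H \<and> finite (rcosets\<^bsub>H\<^esub> K)} = {\<one>\<^bsub>H\<^esub>}"

definition borel_of :: "'x topology \<Rightarrow> 'x measure" where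
  "borel_of T = sigma (topspace T) {U. openin T U}"

end

theory Submission
  imports Defs
begin

lemma topspace_prodiscrete: "topspace (prodiscrete G A) = fullshift G A"
  by (simp add: prodiscrete_def fullshift_def topspace_product_topology)

lemma compact_prodiscrete: "finite A \<Longrightarrow> compact_space (prodiscrete G A)"
  by (simp add: prodiscrete_def compact_space_product_topology compact_space_discrete_topology)

lemma Hausdorff_prodiscrete: "Hausdorff_space (prodiscrete G A)"
  by (simp add: prodiscrete_def Hausdorff_space_product_topology Hausdorff_space_discrete_topology)

lemma open_cyl:
  assumes "openin (prodiscrete G A) U" "u \<in> U"
  shows "\<exists>E. finite E \<and> E \<subseteq> carrier G \<and> (\<forall>v\<in>fullshift G A. (\<forall>h\<in>E. v h = u h) \<longrightarrow> v \<in> U)"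
proof -
  from assms obtain V where V: "finite {i \<in> carrier G. V i \<noteq> A}" "u \<in> (\<Pi>\<^sub>E i\<in>carrier G. V i)"
     "(\<Pi>\<^sub>E i\<in>carrier G. V i) \<subseteq> U"
    unfolding prodiscrete_def openin_product_topology_alt by auto
  show ?thesis
  proof (intro exI conjI ballI impI)
    show "finite {i \<in> carrier G. V i \<noteq> A}" by fact
    show "{i \<in> carrier G. V i \<noteq> A} \<subseteq> carrier G" by auto
    fix v assume v: "v \<in> fullshift G A" "\<forall>h\<in>{i \<in> carrier G. V i \<noteq> A}. v h = u h"
    have "v \<in> (\<Pi>\<^sub>E i\<in>carrier G. V i)"
      using v V(2) unfolding fullshift_def by (auto simp: PiE_iff)
    then show "v \<in> U" using V(3) by auto
  qed
qed

lemma open_cyl_sub: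
  assumes "openin (subtopology (prodiscrete G A) X) U" "u \<in> U"
  shows "\<exists>E. finite E \<and> E \<subseteq> carrier G \<and> (\<forall>v\<in>X \<inter> fullshift G A. (\<forall>h\<in>E. v h = u h) \<longrightarrow> v \<in> U)"
proof -
  from assms obtain V where "openin (prodiscrete G A) V" "U = V \<inter> X" by (auto simp: openin_subtopology)
  with open_cyl[of G A V u] assms(2) show ?thesis by blast
qed

lemma open_point_cyl:
  assumes "h \<in> carrier G"
  shows "openin (prodiscrete G A) {v \<in> fullshift G A. v h = a}"
proof -
  have "continuous_map (prodiscrete G A) (discrete_topology A) (\<lambda>v. v h)"
    unfolding prodiscrete_def using continuous_map_product_projection[OF assms, of "\<lambda>_. discrete_topology A"] by simp
  from openin_continuous_map_preimage[OF this, of "{a} \<inter> A"]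
  moreover have "{x \<in> carrier G \<rightarrow>\<^sub>E A. x h = a \<and> x h \<in> A} = {v \<in> carrier G \<rightarrow>\<^sub>E A. v h = a}"
    using assms by auto
  ultimately show ?thesis by (auto simp: topspace_prodiscrete fullshift_def)
qed

context group begin

lemma shift_app: "h \<in> carrier G \<Longrightarrow> shift G g x h = x (inv g \<otimes> h)"
  by (simp add: shift_def)

lemma shift_mult:
  assumes "g \<in> carrier G" "g' \<in> carrier G"
  shows "shift G g (shift G g' x) = shift G (g \<otimes> g') x"
proof
  fix h show "shift G g (shift G g' x) h = shift G (g \<otimes> g') x h"
    using assms by (cases "h \<in> carrier G") (auto simp: shift_def inv_mult_group m_assoc)
qed

lemma shift_one: "x \<in> fullshift G A \<Longrightarrow> shift G \<one> x = x"
  by (auto simp: shift_def fullshift_def PiE_def extensional_def)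

lemma shift_full: "x \<in> fullshift G A \<Longrightarrow> g \<in> carrier G \<Longrightarrow> shift G g x \<in> fullshift G A"
  by (auto simp: shift_def fullshift_def)

lemma shift_inv_cancel: "x \<in> fullshift G A \<Longrightarrow> g \<in> carrier G \<Longrightarrow> shift G (inv g) (shift G g x) = x"
  by (simp add: shift_mult shift_one)

lemma shift_cancel_inv: "x \<in> fullshift G A \<Longrightarrow> g \<in> carrier G \<Longrightarrow> shift G g (shift G (inv g) x) = x"
  by (simp add: shift_mult shift_one)

definition FI :: "'a set \<Rightarrow> bool" where
  "FI K \<longleftrightarrow> subgroup K G \<and> finite (rcosets K)"

lemma rcos_eqI:
  assumes "subgroup H G" "a \<in> carrier G" "b \<in> carrier G" "a \<otimes> inv b \<in> H"
  shows "H #> a = H #> b"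
proof -
  have "a \<in> H #> b" using subgroup.rcos_module_rev[OF assms(1) is_group assms(3,2,4)] .
  then show ?thesis using repr_independence[of a H b] assms by simp
qed

lemma fin_index_by:
  assumes "subgroup H G" "finite S" "\<And>a. a \<in> carrier G \<Longrightarrow> \<phi> a \<in> S"
    "\<And>a b. a \<in> carrier G \<Longrightarrow> b \<in> carrier G \<Longrightarrow> \<phi> a = \<phi> b \<Longrightarrow> a \<otimes> inv b \<in> H"
  shows "finite (rcosets H)"
proof -
  define \<Psi> where "\<Psi> s = H #> (SOME a. a \<in> carrier G \<and> \<phi> a = s)" for s
  have "rcosets H \<subseteq> \<Psi> ` S"
  proof
    fix C assume "C \<in> rcosets H"
    then obtain a where a: "a \<in> carrier G" "C = H #> a" by (auto simp: RCOSETS_def)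
    define b where "b = (SOME b. b \<in> carrier G \<and> \<phi> b = \<phi> a)"
    have b: "b \<in> carrier G \<and> \<phi> b = \<phi> a" unfolding b_def by (rule someI[of _ a]) (use a in auto)
    have "H #> a = H #> b" using rcos_eqI[OF assms(1) a(1)] b assms(4)[of a b] a by auto
    then have "C = \<Psi> (\<phi> a)" using a b unfolding \<Psi>_def b_def by simp
    then show "C \<in> \<Psi> ` S" using assms(3)[OF a(1)] by auto
  qed
  then show ?thesis using assms(2) finite_subset by blast
qed

lemma FI_Int:
  assumes "FI K1" "FI K2" shows "FI (K1 \<inter> K2)"
proof -
  have s1: "subgroup K1 G" and s2: "subgroup K2 G" using assms by (auto simp: FI_def)
  have s: "subgroup (K1 \<inter> K2) G" using subgroups_Inter_pair[OF s1 s2] .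
  have "finite (rcosets (K1 \<inter> K2))"
  proof (rule fin_index_by[OF s, of "(rcosets K1) \<times> (rcosets K2)" "\<lambda>a. (K1 #> a, K2 #> a)"])
    show "finite ((rcosets K1) \<times> (rcosets K2))" using assms by (auto simp: FI_def)
    show "(K1 #> a, K2 #> a) \<in> (rcosets K1) \<times> (rcosets K2)" if "a \<in> carrier G" for a
      using that s1 s2 by (auto intro!: rcosetsI dest: subgroup.subset)
    fix a b assume ab: "a \<in> carrier G" "b \<in> carrier G" "(K1 #> a, K2 #> a) = (K1 #> b, K2 #> b)"
    have "a \<in> K1 #> b" "a \<in> K2 #> b" using ab rcos_self[OF ab(1) s1] rcos_self[OF ab(1) s2] by auto
    then show "a \<otimes> inv b \<in> K1 \<inter> K2"
      using subgroup.rcos_module_imp[OF s1 is_group ab(2)] subgroup.rcos_module_imp[OF s2 is_group ab(2)] by auto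
  qed
  with s show ?thesis by (simp add: FI_def)
qed

lemma FI_avoid:
  assumes rf: "residually_finite G" and "finite S" "\<one> \<notin> S" "S \<subseteq> carrier G" "FI H0"
  shows "\<exists>K. FI K \<and> K \<subseteq> H0 \<and> K \<inter> S = {}"
  using assms(2-4)
proof (induction S rule: finite_induct)
  case empty then show ?case using assms(5) by auto
next
  case (insert s S)
  then obtain K where K: "FI K" "K \<subseteq> H0" "K \<inter> S = {}" by auto
  have "s \<noteq> \<one>" "s \<in> carrier G" using insert by auto
  then have "s \<notin> \<Inter>{K. subgroup K G \<and> finite (rcosets K)}" using rf by (auto simp: residually_finite_def)
  then obtain K' where "FI K'" "s \<notin> K'" by (auto simp: FI_def)
  then show ?case using K FI_Int[OF K(1) \<open>FI K'\<close>] by (intro exI[of _ "K \<inter> K'"]) auto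
qed

definition stab :: "('a \<Rightarrow> 'c) \<Rightarrow> 'a set" where
  "stab y = {g \<in> carrier G. shift G g y = y}"

lemma stab_FI:
  assumes "y \<in> fullshift G A" "periodic G y"
  shows "FI (stab y)"
proof -
  have s: "subgroup (stab y) G"
  proof (rule subgroupI)
    show "stab y \<subseteq> carrier G" by (auto simp: stab_def)
    show "stab y \<noteq> {}" using assms shift_one by (auto simp: stab_def)
    fix g g' assume "g \<in> stab y" "g' \<in> stab y"
    then show "inv g \<in> stab y" "g \<otimes> g' \<in> stab y"
      by (auto simp: stab_def shift_mult[symmetric])
        (metis assms(1) shift_inv_cancel)
  qed
  have "finite (rcosets (stab y))"
  proof (rule fin_index_by[OF s, of "(\<lambda>g. shift G g y) ` carrier G" "\<lambda>a. shift G (inv a) y"])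
    show "finite ((\<lambda>g. shift G g y) ` carrier G)" using assms by (simp add: periodic_def)
    show "shift G (inv a) y \<in> (\<lambda>g. shift G g y) ` carrier G" if "a \<in> carrier G" for a using that by auto
    fix a b assume ab: "a \<in> carrier G" "b \<in> carrier G" "shift G (inv a) y = shift G (inv b) y"
    have "shift G (a \<otimes> inv b) y = shift G a (shift G (inv b) y)" using ab by (simp add: shift_mult)
    also have "\<dots> = y" using ab assms by (metis shift_cancel_inv)
    finally show "a \<otimes> inv b \<in> stab y" using ab by (auto simp: stab_def)
  qed
  with s show ?thesis by (simp add: FI_def)
qed

lemma periodic_if_inv:
  assumes "FI K" "\<And>k. k \<in> K \<Longrightarrow> shift G k z = z"
  shows "periodic G z"
proof -
  have s: "subgroup K G" using assms by (auto simp: FI_def)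
  have "(\<lambda>g. shift G g z) ` carrier G \<subseteq> (\<lambda>C. shift G (inv (SOME a. a \<in> C)) z) ` (rcosets K)"
  proof
    fix u assume "u \<in> (\<lambda>g. shift G g z) ` carrier G"
    then obtain g where g: "g \<in> carrier G" "u = shift G g z" by auto
    let ?C = "K #> inv g"
    have C: "?C \<in> rcosets K" using g s by (auto intro!: rcosetsI dest: subgroup.subset)
    have "inv g \<in> ?C" using rcos_self[of "inv g" K] g s by auto
    then have a: "(SOME a. a \<in> ?C) \<in> ?C" by (rule someI)
    then obtain k where k: "k \<in> K" "(SOME a. a \<in> ?C) = k \<otimes> inv g" by (auto simp: r_coset_def)
    have kc: "k \<in> carrier G" using k s subgroup.subset by blast
    have "inv (k \<otimes> inv g) = g \<otimes> inv k" using kc g by (simp add: inv_mult_group)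
    then have "shift G (inv (SOME a. a \<in> ?C)) z = shift G g (shift G (inv k) z)"
      using k kc g by (simp add: shift_mult)
    also have "\<dots> = u" using assms(2)[of "inv k"] k s g by (simp add: subgroup.m_inv_closed)
    finally show "u \<in> (\<lambda>C. shift G (inv (SOME a. a \<in> C)) z) ` (rcosets K)" using C by force
  qed
  then show ?thesis unfolding periodic_def using assms(1) FI_def finite_surj by blast
qed

end

context group begin

lemma ft_member:
  assumes Xeq: "X = {x \<in> fullshift G A. \<forall>g\<in>carrier G. restrict (shift G g x) \<Omega> \<in> P}"
    and Om: "\<Omega> \<subseteq> carrier G" and zf: "z \<in> fullshift G A"
    and loc: "\<And>a. a \<in> carrier G \<Longrightarrow> \<exists>y\<in>X. \<exists>b\<in>carrier G. \<forall>\<omega>\<in>\<Omega>. z (a \<otimes> \<omega>) = y (b \<otimes> \<omega>)"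
  shows "z \<in> X"
proof -
  have "restrict (shift G g z) \<Omega> \<in> P" if g: "g \<in> carrier G" for g
  proof -
    obtain y b where yb: "y \<in> X" "b \<in> carrier G" "\<forall>\<omega>\<in>\<Omega>. z (inv g \<otimes> \<omega>) = y (b \<otimes> \<omega>)"
      using loc[of "inv g"] g by auto
    have "restrict (shift G g z) \<Omega> = restrict (shift G (inv b) y) \<Omega>"
    proof (rule restrict_ext)
      fix \<omega> assume "\<omega> \<in> \<Omega>"
      then show "shift G g z \<omega> = shift G (inv b) y \<omega>" using yb Om g by (auto simp: shift_app)
    qed
    moreover have "restrict (shift G (inv b) y) \<Omega> \<in> P" using yb Xeq by auto
    ultimately show ?thesis by simp
  qed
  then show ?thesis using Xeq zf by auto
qed

lemma dense_periodic:
  assumes rf: "residually_finite G" and sub: "subshift G A X" and ft: "finite_type G A X"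
    and si: "strongly_irreducible G X" and y: "y \<in> X" "periodic G y" and x: "x \<in> X"
    and E: "finite E" "E \<subseteq> carrier G"
  shows "\<exists>z\<in>X. periodic G z \<and> (\<forall>h\<in>E. z h = x h)"
proof -
  obtain \<Omega> P where OP: "finite \<Omega>" "\<Omega> \<subseteq> carrier G" "P \<subseteq> (\<Omega> \<rightarrow>\<^sub>E A)"
    and Xeq: "X = {x \<in> fullshift G A. \<forall>g\<in>carrier G. restrict (shift G g x) \<Omega> \<in> P}"
    using ft unfolding finite_type_def by blast
  define \<Delta> where "\<Delta> = (SOME \<Delta>. finite \<Delta> \<and> \<Delta> \<subseteq> carrier G \<and> (\<forall>\<Omega>1 \<Omega>2. finite \<Omega>1 \<and> \<Omega>1 \<subseteq> carrier G \<and> finite \<Omega>2 \<and> \<Omega>2 \<subseteq> carrier G \<and>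
        {a \<otimes> inv d | a d. a \<in> \<Omega>1 \<and> d \<in> \<Delta>} \<inter> \<Omega>2 = {} \<longrightarrow>
        (\<forall>x1\<in>X. \<forall>x2\<in>X. \<exists>x\<in>X. (\<forall>h\<in>\<Omega>1. x h = x1 h) \<and> (\<forall>h\<in>\<Omega>2. x h = x2 h))))"
  have DP: "finite \<Delta> \<and> \<Delta> \<subseteq> carrier G \<and> (\<forall>\<Omega>1 \<Omega>2. finite \<Omega>1 \<and> \<Omega>1 \<subseteq> carrier G \<and> finite \<Omega>2 \<and> \<Omega>2 \<subseteq> carrier G \<and>
        {a \<otimes> inv d | a d. a \<in> \<Omega>1 \<and> d \<in> \<Delta>} \<inter> \<Omega>2 = {} \<longrightarrow>
        (\<forall>x1\<in>X. \<forall>x2\<in>X. \<exists>x\<in>X. (\<forall>h\<in>\<Omega>1. x h = x1 h) \<and> (\<forall>h\<in>\<Omega>2. x h = x2 h)))"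
    unfolding \<Delta>_def by (rule someI_ex) (use si in \<open>simp only: strongly_irreducible_def\<close>)
  have D: "finite \<Delta>" "\<Delta> \<subseteq> carrier G" using DP[THEN conjunct1] DP[THEN conjunct2, THEN conjunct1] by auto
  note SI0 = DP[THEN conjunct2, THEN conjunct2]
  have Xf: "X \<subseteq> fullshift G A" using sub by (simp add: subshift_def)
  define C where "C = E \<union> (\<lambda>(a,d). a \<otimes> inv d) ` (E \<times> \<Delta>)"
  define F where "F = C \<union> (\<lambda>(c,o1,o2). c \<otimes> inv o1 \<otimes> o2) ` (C \<times> \<Omega> \<times> \<Omega>)"
  have Cfin: "finite C" "C \<subseteq> carrier G" using E D by (auto simp: C_def)
  have Ffin: "finite F" "F \<subseteq> carrier G" using Cfin OP by (auto simp: F_def intro!: m_closed inv_closed)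
  have CF: "C \<subseteq> F" by (auto simp: F_def)
  have disj: "{a \<otimes> inv d | a d. a \<in> E \<and> d \<in> \<Delta>} \<inter> (F - C) = {}" by (auto simp: C_def)
  have pre: "finite E \<and> E \<subseteq> carrier G \<and> finite (F - C) \<and> F - C \<subseteq> carrier G \<and>
     {a \<otimes> inv d | a d. a \<in> E \<and> d \<in> \<Delta>} \<inter> (F - C) = {}"
    using E Ffin(1) disj Diff_subset[of F C] Ffin(2) by (intro conjI) (simp_all, blast)
  have glue: "\<forall>x1\<in>X. \<forall>x2\<in>X. \<exists>x\<in>X. (\<forall>h\<in>E. x h = x1 h) \<and> (\<forall>h\<in>F - C. x h = x2 h)"
    using mp[OF SI0[THEN spec[where x=E], THEN spec[where x="F - C"]] pre] .
  obtain w where w: "w \<in> X" "\<forall>h\<in>E. w h = x h" "\<forall>h\<in>F - C. w h = y h"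
    using glue x y by blast
  define S where "S = (\<lambda>(f1,f2). f1 \<otimes> inv f2) ` (F \<times> F) - {\<one>}"
  have "finite S" "\<one> \<notin> S" "S \<subseteq> carrier G" using Ffin by (auto simp: S_def)
  moreover have "FI (stab y)" using stab_FI y Xf by blast
  ultimately obtain K where K: "FI K" "K \<subseteq> stab y" "K \<inter> S = {}" using FI_avoid[OF rf, of S "stab y"] by blast
  have sK: "subgroup K G" using K by (simp add: FI_def)
  have Kc: "k \<in> carrier G" if "k \<in> K" for k using sK that subgroup.subset by blast
  have Ky: "y (inv k \<otimes> h) = y h" if "k \<in> K" "h \<in> carrier G" for k h
  proof -
    have "shift G k y = y" using K(2) that by (auto simp: stab_def)
    then have "shift G k y h = y h" by simp
    then show ?thesis using that(2) by (simp add: shift_app)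
  qed
  have uniq: "k1 = k2" if "k1 \<in> K" "k2 \<in> K" "f1 \<in> F" "f2 \<in> F" "k1 \<otimes> f1 = k2 \<otimes> f2" for k1 k2 f1 f2
  proof -
    have c: "k1 \<in> carrier G" "k2 \<in> carrier G" "f1 \<in> carrier G" "f2 \<in> carrier G" using that Kc Ffin by auto
    have "inv k2 \<otimes> k1 = f2 \<otimes> inv f1"
    proof -
      have "inv k2 \<otimes> k1 = inv k2 \<otimes> (k1 \<otimes> f1) \<otimes> inv f1" using c by (simp add: m_assoc)
      also have "\<dots> = inv k2 \<otimes> (k2 \<otimes> f2) \<otimes> inv f1" using that by simp
      also have "\<dots> = f2 \<otimes> inv f1" using c by (simp add: m_assoc[symmetric])
      finally show ?thesis .
    qed
    moreover have "inv k2 \<otimes> k1 \<in> K" using that sK by (simp add: subgroup.m_closed subgroup.m_inv_closed)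
    moreover have "f2 \<otimes> inv f1 \<in> (\<lambda>(f1,f2). f1 \<otimes> inv f2) ` (F \<times> F)" using that by auto
    ultimately have one: "inv k2 \<otimes> k1 = \<one>" using K(3) by (auto simp: S_def)
    have "k1 = k2 \<otimes> (inv k2 \<otimes> k1)" using c by (simp add: m_assoc[symmetric])
    then show ?thesis using one c by simp
  qed
  define z where "z h = (if h \<in> carrier G then (if \<exists>k\<in>K. \<exists>f\<in>F. h = k \<otimes> f
      then w (inv (SOME k. k \<in> K \<and> (\<exists>f\<in>F. h = k \<otimes> f)) \<otimes> h) else y h) else undefined)" for h
  have zF: "z (k \<otimes> f) = w f" if "k \<in> K" "f \<in> F" for k f
  proof -
    have c: "k \<in> carrier G" "f \<in> carrier G" using that Kc Ffin by auto
    let ?k = "SOME k'. k' \<in> K \<and> (\<exists>f'\<in>F. k \<otimes> f = k' \<otimes> f')"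
    have "?k \<in> K \<and> (\<exists>f'\<in>F. k \<otimes> f = ?k \<otimes> f')" by (rule someI[of _ k]) (use that in auto)
    then have "?k = k" using uniq that by metis
    then show ?thesis using that c unfolding z_def by (auto simp: m_assoc[symmetric])
  qed
  have zy: "z h = y h" if "h \<in> carrier G" "\<not> (\<exists>k\<in>K. \<exists>c\<in>C. h = k \<otimes> c)" for h
  proof (cases "\<exists>k\<in>K. \<exists>f\<in>F. h = k \<otimes> f")
    case True
    then obtain k f where kf: "k \<in> K" "f \<in> F" "h = k \<otimes> f" by auto
    have "f \<notin> C" using that kf by auto
    then have "z h = y f" using zF kf w by auto
    also have "y f = y (inv k \<otimes> h)" using kf Kc Ffin by (auto simp: m_assoc[symmetric])
    also have "\<dots> = y h" using Ky kf that by auto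
    finally show ?thesis .
  next
    case False then show ?thesis using that by (simp add: z_def)
  qed
  have yA: "y h \<in> A" "w h \<in> A" if "h \<in> carrier G" for h
    using that y w Xf by (auto simp: fullshift_def)
  have zfull: "z \<in> fullshift G A"
  proof -
    have "z h \<in> A" if "h \<in> carrier G" for h
    proof (cases "\<exists>k\<in>K. \<exists>f\<in>F. h = k \<otimes> f")
      case True then obtain k f where "k \<in> K" "f \<in> F" "h = k \<otimes> f" by auto
      then show ?thesis using zF yA Ffin by auto
    next
      case False then show ?thesis using that yA by (simp add: z_def)
    qed
    then show ?thesis by (auto simp: fullshift_def z_def)
  qed
  have zX: "z \<in> X"
  proof (rule ft_member[OF Xeq OP(2) zfull])
    fix a assume a: "a \<in> carrier G"
    show "\<exists>y\<in>X. \<exists>b\<in>carrier G. \<forall>\<omega>\<in>\<Omega>. z (a \<otimes> \<omega>) = y (b \<otimes> \<omega>)"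
    proof (cases "\<exists>k\<in>K. \<exists>\<omega>\<in>\<Omega>. \<exists>c\<in>C. a \<otimes> \<omega> = k \<otimes> c")
      case True
      then obtain k \<omega> c where kc: "k \<in> K" "\<omega> \<in> \<Omega>" "c \<in> C" "a \<otimes> \<omega> = k \<otimes> c" by auto
      have cc: "k \<in> carrier G" "\<omega> \<in> carrier G" "c \<in> carrier G" using kc Kc OP Cfin by auto
      have ceq: "c \<otimes> inv \<omega> = inv k \<otimes> a"
      proof -
        have "c = inv k \<otimes> (a \<otimes> \<omega>)" using kc cc by (simp add: m_assoc[symmetric])
        then show ?thesis using cc a by (simp add: m_assoc)
      qed
      have "z (a \<otimes> \<omega>') = w ((inv k \<otimes> a) \<otimes> \<omega>')" if o: "\<omega>' \<in> \<Omega>" for \<omega>'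
      proof -
        have o': "\<omega>' \<in> carrier G" using o OP by auto
        have "c \<otimes> inv \<omega> \<otimes> \<omega>' \<in> F" unfolding F_def
          by (rule UnI2, rule image_eqI[where x="(c,\<omega>,\<omega>')"]) (use kc o in auto)
        moreover have "a \<otimes> \<omega>' = k \<otimes> (c \<otimes> inv \<omega> \<otimes> \<omega>')" using ceq cc a o' by (simp add: m_assoc[symmetric])
        ultimately have "z (a \<otimes> \<omega>') = w (c \<otimes> inv \<omega> \<otimes> \<omega>')" using zF kc by auto
        then show ?thesis using ceq by simp
      qed
      then show ?thesis using w(1) cc a by blast
    next
      case False
      have "z (a \<otimes> \<omega>) = y (a \<otimes> \<omega>)" if "\<omega> \<in> \<Omega>" for \<omega>
        using zy[of "a \<otimes> \<omega>"] False that a OP by blast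
      then show ?thesis using y a by blast
    qed
  qed
  have zK: "shift G k z = z" if k: "k \<in> K" for k
  proof
    fix h
    have kc: "k \<in> carrier G" "inv k \<in> K" using k Kc subgroup.m_inv_closed[OF sK] by auto
    show "shift G k z h = z h"
    proof (cases "h \<in> carrier G")
      case False then show ?thesis by (simp add: shift_def z_def)
    next
      case h: True
      show ?thesis
      proof (cases "\<exists>k'\<in>K. \<exists>f\<in>F. h = k' \<otimes> f")
        case True
        then obtain k' f where kf: "k' \<in> K" "f \<in> F" "h = k' \<otimes> f" by auto
        have "inv k \<otimes> h = (inv k \<otimes> k') \<otimes> f" using kf Kc Ffin kc by (auto simp: m_assoc)
        moreover have "inv k \<otimes> k' \<in> K" by (rule subgroup.m_closed[OF sK]) (use kc kf in auto)
        ultimately show ?thesis using zF kf h by (simp add: shift_app)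
      next
        case False
        have "\<not> (\<exists>k'\<in>K. \<exists>f\<in>F. inv k \<otimes> h = k' \<otimes> f)"
        proof
          assume "\<exists>k'\<in>K. \<exists>f\<in>F. inv k \<otimes> h = k' \<otimes> f"
          then obtain k' f where kf: "k' \<in> K" "f \<in> F" "inv k \<otimes> h = k' \<otimes> f" by auto
          have "h = (k \<otimes> k') \<otimes> f" using kf kc h Kc Ffin
            by (metis (no_types, lifting) in_mono inv_solve_left m_assoc m_closed)
          moreover have "k \<otimes> k' \<in> K" by (rule subgroup.m_closed[OF sK]) (use k kf in auto)
          ultimately show False using False kf by blast
        qed
        then have "z (inv k \<otimes> h) = y (inv k \<otimes> h)" using h kc by (simp add: z_def)
        also have "\<dots> = y h" using Ky k h by auto
        also have "\<dots> = z h" using False h by (simp add: z_def)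
        finally show ?thesis using h by (simp add: shift_app)
      qed
    qed
  qed
  have "periodic G z" using periodic_if_inv[OF K(1) zK] .
  moreover have "z h = x h" if "h \<in> E" for h
  proof -
    have "h \<in> F" "h \<in> carrier G" using that CF E by (auto simp: C_def)
    then have "z (\<one> \<otimes> h) = w h" using zF subgroup.one_closed[OF sK] by blast
    then show ?thesis using that w \<open>h \<in> carrier G\<close> by simp
  qed
  ultimately show ?thesis using zX by blast
qed

end

locale shsys = group G for G :: "('g,'b) monoid_scheme" (structure) +
  fixes A :: "'c set" and X :: "('g \<Rightarrow> 'c) set"
  assumes finA: "finite A" and rf: "residually_finite G" and sub: "subshift G A X"
    and ft: "finite_type G A X" and si: "strongly_irreducible G X" and per: "\<exists>x\<in>X. periodic G x"
begin

lemma Xf: "X \<subseteq> fullshift G A" using sub by (simp add: subshift_def)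
lemma Xshift: "g \<in> carrier G \<Longrightarrow> x \<in> X \<Longrightarrow> shift G g x \<in> X" using sub by (simp add: subshift_def)

lemma topX: "topspace (subtopology (prodiscrete G A) X) = X"
  using Xf by (simp add: topspace_prodiscrete Int_absorb1)

lemma compactX: "compact_space (subtopology (prodiscrete G A) X)"
proof -
  have "closedin (prodiscrete G A) X" using sub by (simp add: subshift_def)
  then have "compactin (prodiscrete G A) X" using closedin_compact_space compact_prodiscrete finA by blast
  then show ?thesis by (rule compact_space_subtopology)
qed

lemma HausX: "Hausdorff_space (subtopology (prodiscrete G A) X)"
  by (simp add: Hausdorff_prodiscrete Hausdorff_space_subtopology)

lemma dense:
  assumes "openin (subtopology (prodiscrete G A) X) U" "u \<in> U"
  shows "\<exists>z\<in>U. periodic G z"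
proof -
  have UX: "U \<subseteq> X" using openin_subset[OF assms(1)] topX by simp
  obtain E where E: "finite E" "E \<subseteq> carrier G" "\<forall>v\<in>X \<inter> fullshift G A. (\<forall>h\<in>E. v h = u h) \<longrightarrow> v \<in> U"
    using open_cyl_sub[OF assms] by blast
  obtain y where y: "y \<in> X" "periodic G y" using per by blast
  obtain z where z: "z \<in> X" "periodic G z" "\<forall>h\<in>E. z h = u h"
    using dense_periodic[OF rf sub ft si y _ E(1,2), of u] UX assms(2) by blast
  then have "z \<in> U" using E(3) Xf by blast
  then show ?thesis using z by blast
qed

definition Fix :: "'g set \<Rightarrow> ('g \<Rightarrow> 'c) set" where
  "Fix H = {u \<in> X. \<forall>h\<in>H. shift G h u = u}"

lemma Fix_finite:
  assumes "FI H" shows "finite (Fix H)"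
proof -
  have s: "subgroup H G" using assms by (simp add: FI_def)
  define f where "f u = (\<lambda>C\<in>rcosets H. u (SOME a. a \<in> C))" for u :: "'g \<Rightarrow> 'c"
  have "inj_on f (Fix H)"
  proof
    fix u v assume uv: "u \<in> Fix H" "v \<in> Fix H" "f u = f v"
    show "u = v"
    proof
      fix g show "u g = v g"
      proof (cases "g \<in> carrier G")
        case False
        have "u \<in> extensional (carrier G)" "v \<in> extensional (carrier G)"
          using uv Xf by (auto simp: Fix_def fullshift_def PiE_def)
        then show ?thesis using False by (simp add: extensional_def)
      next
        case g: True
        let ?C = "H #> g"
        have C: "?C \<in> rcosets H" using g s by (auto intro!: rcosetsI dest: subgroup.subset)
        have "g \<in> ?C" using rcos_self[OF g s] .
        then have "(SOME a. a \<in> ?C) \<in> ?C" by (rule someI)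
        then obtain h where h: "h \<in> H" "(SOME a. a \<in> ?C) = h \<otimes> g" unfolding r_coset_def by blast
        have hc: "h \<in> carrier G" "inv h \<in> H" using subgroup.subset[OF s] subgroup.m_inv_closed[OF s h(1)] h(1) by auto
        have key: "w (h \<otimes> g) = w g" if "w \<in> Fix H" for w
        proof -
          have "shift G (inv h) w = w" using that hc by (auto simp: Fix_def)
          then have "shift G (inv h) w g = w g" by simp
          then show ?thesis using hc g by (simp add: shift_app)
        qed
        have "f u ?C = f v ?C" using uv(3) by simp
        then have "u (SOME a. a \<in> ?C) = v (SOME a. a \<in> ?C)" using C unfolding f_def by simp
        then have "u (h \<otimes> g) = v (h \<otimes> g)" by (simp only: h(2))
        then show ?thesis using key[OF uv(1)] key[OF uv(2)] by simp
      qed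
    qed
  qed
  moreover have "f ` Fix H \<subseteq> (rcosets H) \<rightarrow>\<^sub>E A"
  proof
    fix w assume "w \<in> f ` Fix H"
    then obtain u where u: "u \<in> Fix H" "w = f u" by auto
    have "u (SOME a. a \<in> C) \<in> A" if CC: "C \<in> rcosets H" for C
    proof -
      obtain g where g: "g \<in> carrier G" "C = H #> g" using CC by (auto simp: RCOSETS_def)
      have "g \<in> C" using rcos_self[OF g(1) s] g by simp
      then have "(SOME a. a \<in> C) \<in> C" by (rule someI)
      then have "(SOME a. a \<in> C) \<in> carrier G" using subgroup.rcosets_carrier[OF s is_group CC] by blast
      then show ?thesis using u Xf by (auto simp: Fix_def fullshift_def)
    qed
    then show "w \<in> (rcosets H) \<rightarrow>\<^sub>E A" using u by (auto simp: f_def)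
  qed
  moreover have "finite ((rcosets H) \<rightarrow>\<^sub>E A)" using assms finA by (simp add: FI_def finite_PiE)
  ultimately show ?thesis using inj_on_finite by blast
qed

lemma periodic_in_Fix:
  assumes "z \<in> X" "periodic G z" shows "z \<in> Fix (stab z)" "FI (stab z)"
  using assms Xf stab_FI by (auto simp: Fix_def stab_def)

lemma CA_into: assumes "cellular_automaton G A X \<tau>" "u \<in> X" shows "\<tau> u \<in> X"
proof -
  have "continuous_map (subtopology (prodiscrete G A) X) (subtopology (prodiscrete G A) X) \<tau>"
    using assms by (simp add: cellular_automaton_def)
  from continuous_map_image_subset_topspace[OF this] have "\<tau> ` X \<subseteq> X" by (simp only: topX)
  then show ?thesis using assms by auto
qed

lemma CA_Fix: assumes "cellular_automaton G A X \<tau>" "u \<in> Fix H" "H \<subseteq> carrier G"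
  shows "\<tau> u \<in> Fix H"
proof -
  have "shift G h (\<tau> u) = \<tau> u" if "h \<in> H" for h
    using assms that by (auto simp: cellular_automaton_def Fix_def) (metis subsetD)
  then show ?thesis using assms CA_into by (auto simp: Fix_def)
qed

lemma surj: "surjunctive G A X"
  unfolding surjunctive_def
proof (intro allI impI, elim conjE)
  fix \<tau> assume ca: "cellular_automaton G A X \<tau>" and inj: "inj_on \<tau> X"
  let ?T = "subtopology (prodiscrete G A) X"
  have sub1: "\<tau> ` X \<subseteq> X" using CA_into[OF ca] by auto
  have cont: "continuous_map ?T ?T \<tau>" using ca by (simp add: cellular_automaton_def)
  have "compactin ?T (\<tau> ` X)"
    using image_compactin[OF _ cont, of X] compactX topX by (metis compact_space_def)
  then have cl: "closedin ?T (\<tau> ` X)" using compactin_imp_closedin HausX by blast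
  have "X \<subseteq> \<tau> ` X"
  proof
    fix u assume u: "u \<in> X"
    show "u \<in> \<tau> ` X"
    proof (rule ccontr)
      assume "u \<notin> \<tau> ` X"
      have "openin ?T (X - \<tau> ` X)" using cl topX by (metis openin_diff openin_topspace closedin_def)
      then obtain z where z: "z \<in> X - \<tau> ` X" "periodic G z" using dense[of "X - \<tau> ` X" u] u \<open>u \<notin> \<tau> ` X\<close> by blast
      have F: "z \<in> Fix (stab z)" "FI (stab z)" using periodic_in_Fix z by auto
      have Hs: "stab z \<subseteq> carrier G" by (auto simp: stab_def)
      have "\<tau> ` Fix (stab z) = Fix (stab z)"
        by (rule endo_inj_surj) (use Fix_finite[OF F(2)] CA_Fix[OF ca _ Hs] inj_on_subset[OF inj] in \<open>auto simp: Fix_def\<close>)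
      then have "z \<in> \<tau> ` X" using F(1) by (auto simp: Fix_def)
      then show False using z by auto
    qed
  qed
  then show "\<tau> ` X = X" using sub1 by auto
qed

end

context shsys begin

lemma Aut_simps:
  "carrier (Aut G A X) = {\<tau> \<in> extensional X. cellular_automaton G A X \<tau> \<and> bij_betw \<tau> X X}"
  "mult (Aut G A X) = (\<lambda>\<sigma> \<tau>. restrict (\<sigma> \<circ> \<tau>) X)"
  "one (Aut G A X) = restrict id X"
  by (simp_all add: Aut_def)

lemma CA_comp:
  assumes "cellular_automaton G A X \<sigma>" "cellular_automaton G A X \<tau>"
  shows "cellular_automaton G A X (restrict (\<sigma> \<circ> \<tau>) X)"
proof -
  let ?T = "subtopology (prodiscrete G A) X"
  have "continuous_map ?T ?T (\<sigma> \<circ> \<tau>)"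
    using assms continuous_map_compose by (auto simp: cellular_automaton_def)
  then have c: "continuous_map ?T ?T (restrict (\<sigma> \<circ> \<tau>) X)"
    by (rule continuous_map_eq) (simp add: topX)
  have "restrict (\<sigma> \<circ> \<tau>) X (shift G g x) = shift G g (restrict (\<sigma> \<circ> \<tau>) X x)"
    if "g \<in> carrier G" "x \<in> X" for g x
  proof -
    have "\<tau> x \<in> X" using CA_into assms(2) that by blast
    then show ?thesis using that assms Xshift by (auto simp: cellular_automaton_def)
  qed
  with c show ?thesis by (simp add: cellular_automaton_def)
qed

lemma CA_id: "cellular_automaton G A X (restrict id X)"
proof -
  let ?T = "subtopology (prodiscrete G A) X"
  have c: "continuous_map ?T ?T (restrict id X)"
    by (rule continuous_map_eq[OF continuous_map_id]) (simp add: topX)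
  then show ?thesis using Xshift by (simp add: cellular_automaton_def)
qed

lemma CA_inv:
  assumes ca: "cellular_automaton G A X \<sigma>" and bij: "bij_betw \<sigma> X X"
  shows "cellular_automaton G A X (restrict (inv_into X \<sigma>) X)"
proof -
  let ?T = "subtopology (prodiscrete G A) X"
  have cont: "continuous_map ?T ?T \<sigma>" using ca by (simp add: cellular_automaton_def)
  have cm: "closed_map ?T ?T \<sigma>" using continuous_imp_closed_map[OF cont compactX HausX] .
  have s1: "\<sigma> ` topspace ?T = topspace ?T" unfolding topX using bij by (simp add: bij_betw_def)
  have s2: "inj_on \<sigma> (topspace ?T)" unfolding topX using bij by (simp add: bij_betw_def)
  have "homeomorphic_map ?T ?T \<sigma>" by (rule bijective_closed_imp_homeomorphic_map[OF cont cm s1 s2])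
  then obtain g where g: "homeomorphic_maps ?T ?T \<sigma> g" using homeomorphic_map_maps by blast
  then have gc: "continuous_map ?T ?T g" and gf: "\<forall>y\<in>X. \<sigma> (g y) = y"
    unfolding homeomorphic_maps_def topX by blast+
  have gX: "g y \<in> X" if "y \<in> X" for y
    using continuous_map_image_subset_topspace[OF gc] that topX by auto
  have c: "continuous_map ?T ?T (restrict (inv_into X \<sigma>) X)"
  proof (rule continuous_map_eq[OF gc])
    fix y assume "y \<in> topspace ?T"
    then have y: "y \<in> X" using topX by simp
    have "inv_into X \<sigma> (\<sigma> (g y)) = g y" using bij gX[OF y] by (simp add: bij_betw_def inv_into_f_f)
    then show "g y = restrict (inv_into X \<sigma>) X y" using gf y by simp
  qed
  have "restrict (inv_into X \<sigma>) X (shift G h x) = shift G h (restrict (inv_into X \<sigma>) X x)"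
    if h: "h \<in> carrier G" and x: "x \<in> X" for h x
  proof -
    define v where "v = inv_into X \<sigma> x"
    have v: "v \<in> X" "\<sigma> v = x" using bij x unfolding v_def
      by (auto simp: bij_betw_inv_into_right bij_betw_def intro: inv_into_into)
    have "\<sigma> (shift G h v) = shift G h x" using ca h v by (auto simp: cellular_automaton_def)
    moreover have "shift G h v \<in> X" using Xshift h v by auto
    ultimately have "inv_into X \<sigma> (shift G h x) = shift G h v"
      using bij by (metis bij_betw_def inv_into_f_f)
    then show ?thesis using x h Xshift v_def by simp
  qed
  with c show ?thesis by (simp add: cellular_automaton_def)
qed

lemma Aut_group: "group (Aut G A X)"
proof (rule groupI)
  fix x y assume x: "x \<in> carrier (Aut G A X)" and y: "y \<in> carrier (Aut G A X)"
  have "bij_betw (x \<circ> y) X X" using x y bij_betw_trans by (auto simp: Aut_simps)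
  then have "bij_betw (restrict (x \<circ> y) X) X X" by (rule bij_betw_cong[THEN iffD1, rotated]) simp
  then show "x \<otimes>\<^bsub>Aut G A X\<^esub> y \<in> carrier (Aut G A X)"
    using x y CA_comp by (auto simp: Aut_simps)
next
  show "\<one>\<^bsub>Aut G A X\<^esub> \<in> carrier (Aut G A X)"
    using CA_id by (auto simp: Aut_simps bij_betw_def inj_on_def)
next
  fix x y z assume x: "x \<in> carrier (Aut G A X)" and y: "y \<in> carrier (Aut G A X)" and z: "z \<in> carrier (Aut G A X)"
  have "z v \<in> X" if "v \<in> X" for v using z that by (auto simp: Aut_simps bij_betw_def)
  then show "x \<otimes>\<^bsub>Aut G A X\<^esub> y \<otimes>\<^bsub>Aut G A X\<^esub> z = x \<otimes>\<^bsub>Aut G A X\<^esub> (y \<otimes>\<^bsub>Aut G A X\<^esub> z)"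
    by (auto simp: Aut_simps)
next
  fix x assume x: "x \<in> carrier (Aut G A X)"
  have "x v \<in> X" if "v \<in> X" for v using x that by (auto simp: Aut_simps bij_betw_def)
  then show "\<one>\<^bsub>Aut G A X\<^esub> \<otimes>\<^bsub>Aut G A X\<^esub> x = x"
    using x by (auto simp: Aut_simps extensional_def)
next
  fix x assume x: "x \<in> carrier (Aut G A X)"
  have xb: "bij_betw x X X" "cellular_automaton G A X x" using x by (auto simp: Aut_simps)
  let ?y = "restrict (inv_into X x) X"
  have "bij_betw (inv_into X x) X X" using xb bij_betw_inv_into by blast
  then have "bij_betw ?y X X" by (rule bij_betw_cong[THEN iffD1, rotated]) simp
  then have "?y \<in> carrier (Aut G A X)" using CA_inv[OF xb(2,1)] by (auto simp: Aut_simps)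
  moreover have "?y \<otimes>\<^bsub>Aut G A X\<^esub> x = \<one>\<^bsub>Aut G A X\<^esub>"
  proof -
    have "x v \<in> X" "inv_into X x (x v) = v" if "v \<in> X" for v
      using xb that by (auto simp: bij_betw_def inv_into_f_f)
    then show ?thesis by (auto simp: Aut_simps)
  qed
  ultimately show "\<exists>y\<in>carrier (Aut G A X). y \<otimes>\<^bsub>Aut G A X\<^esub> x = \<one>\<^bsub>Aut G A X\<^esub>" by blast
qed

end

context shsys begin

lemma Aut_app: "\<sigma> \<in> carrier (Aut G A X) \<Longrightarrow> \<tau> \<in> carrier (Aut G A X) \<Longrightarrow> v \<in> X \<Longrightarrow>
   (\<sigma> \<otimes>\<^bsub>Aut G A X\<^esub> \<tau>) v = \<sigma> (\<tau> v)"
  by (simp add: Aut_simps)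

lemma Aut_into: "\<sigma> \<in> carrier (Aut G A X) \<Longrightarrow> v \<in> X \<Longrightarrow> \<sigma> v \<in> X"
  by (auto simp: Aut_simps bij_betw_def)

lemma Aut_Fix:
  assumes "\<sigma> \<in> carrier (Aut G A X)" "FI H" shows "\<sigma> ` Fix H = Fix H"
proof -
  have Hs: "H \<subseteq> carrier G" using assms(2) by (auto simp: FI_def dest: subgroup.subset)
  have ca: "cellular_automaton G A X \<sigma>" and inj: "inj_on \<sigma> X" using assms by (auto simp: Aut_simps bij_betw_def)
  show ?thesis
    by (rule endo_inj_surj) (use Fix_finite[OF assms(2)] CA_Fix[OF ca _ Hs] inj_on_subset[OF inj] in \<open>auto simp: Fix_def\<close>)
qed

lemma Aut_inv_app:
  assumes "\<sigma> \<in> carrier (Aut G A X)" "v \<in> X"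
  shows "(inv\<^bsub>Aut G A X\<^esub> \<sigma>) (\<sigma> v) = v"
proof -
  interpret Ag: group "Aut G A X" by (rule Aut_group)
  have "(inv\<^bsub>Aut G A X\<^esub> \<sigma> \<otimes>\<^bsub>Aut G A X\<^esub> \<sigma>) v = \<one>\<^bsub>Aut G A X\<^esub> v" using Ag.l_inv assms(1) by simp
  then show ?thesis using assms Aut_app[of "inv\<^bsub>Aut G A X\<^esub> \<sigma>" \<sigma> v] Ag.inv_closed by (simp add: Aut_simps)
qed

lemma Aut_rf: "residually_finite (Aut G A X)"
proof -
  interpret Ag: group "Aut G A X" by (rule Aut_group)
  let ?Aut = "Aut G A X"
  let ?Fam = "{K. subgroup K ?Aut \<and> finite (rcosets\<^bsub>?Aut\<^esub> K)}"
  have fam_carrier: "carrier ?Aut \<in> ?Fam"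
  proof -
    have "rcosets\<^bsub>?Aut\<^esub> (carrier ?Aut) \<subseteq> {carrier ?Aut}"
      using subgroup.rcos_const[OF Ag.subgroup_self Ag.is_group] by (auto simp: RCOSETS_def)
    then show ?thesis using Ag.subgroup_self finite_subset by auto
  qed
  have one_in: "\<one>\<^bsub>?Aut\<^esub> \<in> \<Inter>?Fam" using subgroup.one_closed by auto
  have sep: "\<exists>K\<in>?Fam. \<sigma> \<notin> K" if s: "\<sigma> \<in> carrier ?Aut" "\<sigma> \<noteq> \<one>\<^bsub>?Aut\<^esub>" for \<sigma>
  proof -
    let ?T = "subtopology (prodiscrete G A) X"
    have se: "\<sigma> \<in> extensional X" using s by (simp add: Aut_simps)
    obtain u where u: "u \<in> X" "\<sigma> u \<noteq> u"
    proof (rule ccontr)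
      assume "\<not> thesis"
      then have "\<forall>u\<in>X. \<sigma> u = u" using that by blast
      then have "\<sigma> = restrict id X" using se by (auto simp: extensional_def)
      then show False using s by (simp add: Aut_simps)
    qed
    have su: "\<sigma> u \<in> X" using Aut_into s u by blast
    obtain h where h: "h \<in> carrier G" "\<sigma> u h \<noteq> u h"
    proof (rule ccontr)
      assume "\<not> thesis"
      then have "\<forall>h\<in>carrier G. \<sigma> u h = u h" using that by blast
      moreover have "\<sigma> u \<in> extensional (carrier G)" "u \<in> extensional (carrier G)"
        using su u Xf by (auto simp: fullshift_def PiE_def)
      ultimately have "\<sigma> u = u" using extensionalityI[of "\<sigma> u" "carrier G" u] by blast
      then show False using u by simp
    qed
    have cont: "continuous_map ?T ?T \<sigma>" using s by (simp add: Aut_simps cellular_automaton_def)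
    have o1: "openin ?T (X \<inter> {v \<in> fullshift G A. v h = \<sigma> u h})"
      by (rule openin_subtopology_Int2[OF open_point_cyl[OF h(1)]])
    have o2: "openin ?T (X \<inter> {v \<in> fullshift G A. v h = u h})"
      by (rule openin_subtopology_Int2[OF open_point_cyl[OF h(1)]])
    have o3: "openin ?T {v \<in> topspace ?T. \<sigma> v \<in> X \<inter> {v \<in> fullshift G A. v h = \<sigma> u h}}"
      by (rule openin_continuous_map_preimage[OF cont o1])
    have "openin ?T ({v \<in> topspace ?T. \<sigma> v \<in> X \<inter> {v \<in> fullshift G A. v h = \<sigma> u h}} \<inter> (X \<inter> {v \<in> fullshift G A. v h = u h}))"
      using o2 o3 by (rule openin_Int[rotated])
    moreover have "u \<in> {v \<in> topspace ?T. \<sigma> v \<in> X \<inter> {v \<in> fullshift G A. v h = \<sigma> u h}} \<inter> (X \<inter> {v \<in> fullshift G A. v h = u h})"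
      using u su Xf h by (auto simp: topspace_prodiscrete)
    ultimately obtain z where z: "z \<in> {v \<in> topspace ?T. \<sigma> v \<in> X \<inter> {v \<in> fullshift G A. v h = \<sigma> u h}} \<inter> (X \<inter> {v \<in> fullshift G A. v h = u h})"
       "periodic G z" using dense by blast
    have zX: "z \<in> X" and zneq: "\<sigma> z \<noteq> z" using z h by auto
    define H where "H = stab z"
    have FH: "FI H" and zF: "z \<in> Fix H" using periodic_in_Fix[OF zX z(2)] by (auto simp: H_def)
    define N where "N = {\<tau> \<in> carrier ?Aut. \<forall>v\<in>Fix H. \<tau> v = v}"
    have FixX: "Fix H \<subseteq> X" by (auto simp: Fix_def)
    have sN: "subgroup N ?Aut"
    proof (rule Ag.subgroupI)
      show "N \<subseteq> carrier ?Aut" by (auto simp: N_def)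
      have "\<forall>v\<in>Fix H. \<one>\<^bsub>?Aut\<^esub> v = v" using FixX by (auto simp: Aut_simps)
      then have "\<one>\<^bsub>?Aut\<^esub> \<in> N" using Ag.one_closed unfolding N_def by blast
      then show "N \<noteq> {}" by blast
      fix a b assume a: "a \<in> N" and b: "b \<in> N"
      have ac: "a \<in> carrier ?Aut" "b \<in> carrier ?Aut" using a b by (auto simp: N_def)
      show "inv\<^bsub>?Aut\<^esub> a \<in> N"
      proof -
        have "(inv\<^bsub>?Aut\<^esub> a) v = v" if "v \<in> Fix H" for v
          using Aut_inv_app[OF ac(1), of v] a that FixX by (auto simp: N_def)
        then show ?thesis using ac Ag.inv_closed by (auto simp: N_def)
      qed
      show "a \<otimes>\<^bsub>?Aut\<^esub> b \<in> N"
        using a b ac Ag.m_closed FixX by (auto simp: N_def Aut_app)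
    qed
    have "finite (rcosets\<^bsub>?Aut\<^esub> N)"
    proof (rule Ag.fin_index_by[OF sN, of "Fix H \<rightarrow>\<^sub>E Fix H" "\<lambda>\<tau>. restrict \<tau> (Fix H)"])
      show "finite (Fix H \<rightarrow>\<^sub>E Fix H)" using Fix_finite[OF FH] by (simp add: finite_PiE)
      show "restrict a (Fix H) \<in> Fix H \<rightarrow>\<^sub>E Fix H" if "a \<in> carrier ?Aut" for a
        using Aut_Fix[OF that FH] by auto
      fix a b assume a: "a \<in> carrier ?Aut" and b: "b \<in> carrier ?Aut" and eq: "restrict a (Fix H) = restrict b (Fix H)"
      have "(a \<otimes>\<^bsub>?Aut\<^esub> inv\<^bsub>?Aut\<^esub> b) v = v" if v: "v \<in> Fix H" for v
      proof -
        obtain v' where v': "v' \<in> Fix H" "v = b v'" using Aut_Fix[OF b FH] v by blast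
        have "(inv\<^bsub>?Aut\<^esub> b) v = v'" using Aut_inv_app[OF b, of v'] v' FixX by auto
        moreover have "a v' = b v'" using eq v' by (metis restrict_apply')
        ultimately show ?thesis using Aut_app[OF a Ag.inv_closed[OF b], of v] v FixX v' by auto
      qed
      then show "a \<otimes>\<^bsub>?Aut\<^esub> inv\<^bsub>?Aut\<^esub> b \<in> N" using a b Ag.m_closed Ag.inv_closed by (auto simp: N_def)
    qed
    then have "N \<in> ?Fam" using sN by auto
    moreover have "\<sigma> \<notin> N" using zF zneq by (auto simp: N_def)
    ultimately show ?thesis by blast
  qed
  have "\<Inter>?Fam = {\<one>\<^bsub>?Aut\<^esub>}"
  proof
    show "{\<one>\<^bsub>?Aut\<^esub>} \<subseteq> \<Inter>?Fam" using one_in by auto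
    show "\<Inter>?Fam \<subseteq> {\<one>\<^bsub>?Aut\<^esub>}"
    proof
      fix \<sigma> assume sI: "\<sigma> \<in> \<Inter>?Fam"
      then have "\<sigma> \<in> carrier ?Aut" using fam_carrier by blast
      then show "\<sigma> \<in> {\<one>\<^bsub>?Aut\<^esub>}" using sep sI by blast
    qed
  qed
  then show ?thesis by (simp add: residually_finite_def)
qed

end

context shsys begin

lemma shift_cont_full: assumes g: "g \<in> carrier G"
  shows "continuous_map (prodiscrete G A) (prodiscrete G A) (shift G g)"
  unfolding prodiscrete_def continuous_map_componentwise
proof (intro conjI ballI)
  show "shift G g ` topspace (product_topology (\<lambda>_. discrete_topology A) (carrier G)) \<subseteq> extensional (carrier G)"
    by (auto simp: shift_def)
  fix k assume k: "k \<in> carrier G"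
  have "continuous_map (product_topology (\<lambda>_. discrete_topology A) (carrier G)) (discrete_topology A) (\<lambda>x. x (inv g \<otimes> k))"
    using continuous_map_product_projection[of "inv g \<otimes> k" "carrier G" "\<lambda>_. discrete_topology A"] g k by simp
  then show "continuous_map (product_topology (\<lambda>_. discrete_topology A) (carrier G)) (discrete_topology A) (\<lambda>x. shift G g x k)"
    by (rule continuous_map_eq) (simp add: shift_app k)
qed

lemma shift_cont: assumes g: "g \<in> carrier G"
  shows "continuous_map (subtopology (prodiscrete G A) X) (subtopology (prodiscrete G A) X) (shift G g)"
  by (rule continuous_map_into_subtopology[OF continuous_map_from_subtopology[OF shift_cont_full[OF g]]])
     (use Xshift g in \<open>auto simp: topX\<close>)

lemma shift_img: assumes g: "g \<in> carrier G" and a: "a \<subseteq> X"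
  shows "shift G g ` a = {v \<in> X. shift G (inv g) v \<in> a}"
proof
  show "shift G g ` a \<subseteq> {v \<in> X. shift G (inv g) v \<in> a}"
  proof
    fix v assume "v \<in> shift G g ` a"
    then obtain w where w: "w \<in> a" "v = shift G g w" by auto
    have "w \<in> fullshift G A" using w a Xf by auto
    then have "shift G (inv g) v = w" using w g shift_inv_cancel by simp
    then show "v \<in> {v \<in> X. shift G (inv g) v \<in> a}" using w a g Xshift by auto
  qed
  show "{v \<in> X. shift G (inv g) v \<in> a} \<subseteq> shift G g ` a"
  proof
    fix v assume v: "v \<in> {v \<in> X. shift G (inv g) v \<in> a}"
    then have "v = shift G g (shift G (inv g) v)" using shift_cancel_inv[of v A g] Xf g by auto
    then show "v \<in> shift G g ` a" using v by blast
  qed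
qed

lemma shift_bij: assumes g: "g \<in> carrier G" shows "shift G g ` X = X" "inj_on (shift G g) X"
proof -
  show "shift G g ` X = X" using shift_img[OF g order_refl] g Xshift by auto
  show "inj_on (shift G g) X"
    by (rule inj_on_inverseI[where g="shift G (inv g)"]) (use Xf g shift_inv_cancel in auto)
qed

lemma sigma_shift:
  assumes B: "B \<in> sigma_sets X {U. openin (subtopology (prodiscrete G A) X) U}" and g: "g \<in> carrier G"
  shows "shift G g ` B \<in> sigma_sets X {U. openin (subtopology (prodiscrete G A) X) U}"
  using B
proof (induction rule: sigma_sets.induct)
  case (Basic a)
  let ?T = "subtopology (prodiscrete G A) X"
  have aX: "a \<subseteq> X" using Basic openin_subset topX by fastforce
  have "openin ?T {v \<in> topspace ?T. shift G (inv g) v \<in> a}"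
    using openin_continuous_map_preimage[OF shift_cont[of "inv g"]] g Basic by auto
  moreover have "{v \<in> topspace ?T. shift G (inv g) v \<in> a} = shift G g ` a"
    unfolding topX using shift_img[OF g aX] by simp
  ultimately show ?case by auto
next
  case Empty then show ?case by (simp add: sigma_sets.Empty)
next
  case (Compl a)
  have P: "{U. openin (subtopology (prodiscrete G A) X) U} \<subseteq> Pow X"
    using openin_subset[of "subtopology (prodiscrete G A) X"] by (auto simp: topX)
  have aX: "a \<subseteq> X" using sigma_sets_into_sp[OF P Compl(1)] .
  have "shift G g ` (X - a) = X - shift G g ` a"
    using inj_on_image_set_diff[OF shift_bij(2)[OF g], of X a] aX shift_bij(1)[OF g] by auto
  then show ?case using Compl(2) by (simp add: sigma_sets.Compl)
next
  case (Union a)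
  then show ?case by (simp add: image_UN sigma_sets.Union)
qed

end

context shsys begin

lemma measure_exists:
  assumes cG: "countable (carrier G)"
  shows "\<exists>\<mu>. prob_space \<mu> \<and> sets \<mu> = sets (borel_of (subtopology (prodiscrete G A) X)) \<and>
           (\<forall>g\<in>carrier G. \<forall>B\<in>sets \<mu>. emeasure \<mu> (shift G g ` B) = emeasure \<mu> B) \<and>
           (\<forall>U. openin (subtopology (prodiscrete G A) X) U \<and> U \<noteq> {} \<longrightarrow> emeasure \<mu> U > 0)"
proof -
  let ?T = "subtopology (prodiscrete G A) X"
  let ?Op = "{U. openin ?T U}"
  have P: "?Op \<subseteq> Pow X" using openin_subset[of ?T] by (auto simp: topX)
  define I where "I = Sigma {E. finite E \<and> E \<subseteq> carrier G} (\<lambda>E. E \<rightarrow>\<^sub>E A)"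
  have cI: "countable I" unfolding I_def
    by (rule countable_SIGMA[OF countable_Collect_finite_subset[OF cG]])
       (use finA in \<open>auto intro!: countable_finite finite_PiE\<close>)
  define J where "J = {ep \<in> I. \<exists>x\<in>X. \<forall>h\<in>fst ep. x h = snd ep h}"
  define pick where "pick ep = (SOME z. z \<in> X \<and> periodic G z \<and> (\<forall>h\<in>fst ep. z h = snd ep h))" for ep
  obtain y where y: "y \<in> X" "periodic G y" using per by blast
  have pickP: "pick ep \<in> X \<and> periodic G (pick ep) \<and> (\<forall>h\<in>fst ep. pick ep h = snd ep h)" if ep: "ep \<in> J" for ep
  proof -
    obtain x where x: "x \<in> X" "\<forall>h\<in>fst ep. x h = snd ep h" using ep by (auto simp: J_def)
    have E: "finite (fst ep)" "fst ep \<subseteq> carrier G" using ep by (auto simp: J_def I_def)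
    obtain z where "z \<in> X" "periodic G z" "\<forall>h\<in>fst ep. z h = x h"
      using dense_periodic[OF rf sub ft si y x(1) E] by blast
    then have "\<exists>z. z \<in> X \<and> periodic G z \<and> (\<forall>h\<in>fst ep. z h = snd ep h)" using x by auto
    then show ?thesis unfolding pick_def by (rule someI_ex)
  qed
  define D where "D = pick ` J"
  have cD: "countable D" unfolding D_def by (rule countable_image, rule countable_subset[OF _ cI]) (auto simp: J_def)
  have DX: "d \<in> X" "periodic G d" if "d \<in> D" for d using that pickP by (auto simp: D_def)
  have Ddense: "\<exists>d\<in>D. d \<in> U" if U: "openin ?T U" "u \<in> U" for U u
  proof -
    have uX: "u \<in> X" using U openin_subset topX by fastforce
    obtain E where E: "finite E" "E \<subseteq> carrier G" "\<forall>v\<in>X \<inter> fullshift G A. (\<forall>h\<in>E. v h = u h) \<longrightarrow> v \<in> U"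
      using open_cyl_sub[OF U] by blast
    have "u \<in> fullshift G A" using uX Xf by auto
    then have "(E, restrict u E) \<in> J" using E uX by (auto simp: J_def I_def fullshift_def)
    then have "pick (E, restrict u E) \<in> D" and pp: "pick (E, restrict u E) \<in> X" "\<forall>h\<in>E. pick (E, restrict u E) h = u h"
      using pickP[of "(E, restrict u E)"] by (auto simp: D_def)
    moreover have "pick (E, restrict u E) \<in> U" using E(3) pp Xf by blast
    ultimately show ?thesis by blast
  qed
  have D0: "D \<noteq> {}"
  proof -
    have "openin ?T X" using openin_topspace[of ?T] by (simp only: topX)
    then show ?thesis using Ddense y(1) by blast
  qed
  define zs where "zs = from_nat_into D"
  have rz: "range zs = D" unfolding zs_def using D0 cD by simp
  have zsX: "zs i \<in> X" "periodic G (zs i)" for i using DX rz by auto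
  define Orb where "Orb i = (\<lambda>g. shift G g (zs i)) ` carrier G" for i
  have Ofin: "finite (Orb i)" for i using zsX by (simp add: Orb_def periodic_def)
  have zsO: "zs i \<in> Orb i" for i
  proof -
    have "shift G \<one> (zs i) = zs i" using zsX Xf shift_one by blast
    then show ?thesis unfolding Orb_def by (metis image_eqI one_closed)
  qed
  have OX: "Orb i \<subseteq> X" for i using zsX Xshift by (auto simp: Orb_def)
  have Ocard: "card (Orb i) > 0" for i using Ofin zsO card_gt_0_iff by blast
  have Oinv: "shift G g v \<in> Orb i \<longleftrightarrow> v \<in> Orb i" if g: "g \<in> carrier G" and v: "v \<in> X" for g v i
  proof
    assume "shift G g v \<in> Orb i"
    then obtain g' where g': "g' \<in> carrier G" "shift G g v = shift G g' (zs i)" by (auto simp: Orb_def)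
    have "v \<in> fullshift G A" using v Xf by auto
    then have "v = shift G (inv g) (shift G g v)" using g shift_inv_cancel[of v A g] by simp
    also have "\<dots> = shift G (inv g \<otimes> g') (zs i)" using g' g by (simp add: shift_mult)
    finally show "v \<in> Orb i" using g g' by (auto simp: Orb_def)
  next
    assume "v \<in> Orb i"
    then obtain g' where g': "g' \<in> carrier G" "v = shift G g' (zs i)" by (auto simp: Orb_def)
    then show "shift G g v \<in> Orb i" using g by (auto simp: Orb_def shift_mult)
  qed
  define c where "c i = ennreal ((1/2)^Suc i / real (card (Orb i)))" for i
  define w where "w v = (\<Sum>i. c i * indicator (Orb i) v)" for v
  define \<nu> where "\<nu> = density (count_space UNIV) w"
  define f where "f B = (\<Sum>i. c i * of_nat (card (Orb i \<inter> B)))" for B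
  have nuf: "emeasure \<nu> B = f B" for B
  proof -
    have "emeasure \<nu> B = (\<integral>\<^sup>+ v. w v * indicator B v \<partial>count_space UNIV)"
      unfolding \<nu>_def by (rule emeasure_density) auto
    also have "\<dots> = (\<integral>\<^sup>+ v. (\<Sum>i. c i * indicator (Orb i \<inter> B) v) \<partial>count_space UNIV)"
      by (rule nn_integral_cong) (simp add: w_def indicator_inter_arith mult.assoc[symmetric])
    also have "\<dots> = (\<Sum>i. \<integral>\<^sup>+ v. c i * indicator (Orb i \<inter> B) v \<partial>count_space UNIV)"
      by (rule nn_integral_suminf) auto
    also have "\<dots> = f B"
      unfolding f_def by (rule suminf_cong) (simp add: nn_integral_cmult_indicator Ofin)
    finally show ?thesis .
  qed
  define \<mu> where "\<mu> = measure_of X (sigma_sets X ?Op) (emeasure \<nu>)"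
  have SA: "sigma_algebra X (sigma_sets X ?Op)" by (rule sigma_algebra_sigma_sets[OF P])
  have pos: "positive (sigma_sets X ?Op) (emeasure \<nu>)" by (simp add: positive_def)
  have ca: "countably_additive (sigma_sets X ?Op) (emeasure \<nu>)"
    unfolding countably_additive_def
  proof (intro allI impI)
    fix Bs :: "nat \<Rightarrow> ('g \<Rightarrow> 'c) set" assume "disjoint_family Bs"
    then show "(\<Sum>i. emeasure \<nu> (Bs i)) = emeasure \<nu> (\<Union> (range Bs))"
      by (intro suminf_emeasure) (auto simp: \<nu>_def)
  qed
  have em: "emeasure \<mu> B = f B" if "B \<in> sigma_sets X ?Op" for B
    unfolding \<mu>_def using emeasure_measure_of_sigma[OF SA pos ca that] nuf by simp
  have PP: "sigma_sets X ?Op \<subseteq> Pow X" using sigma_sets_into_sp[OF P] by blast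
  have setsmu: "sets \<mu> = sigma_sets X ?Op"
    unfolding \<mu>_def using sets_measure_of[OF PP] sigma_sets_sigma_sets_eq[OF P] by simp
  have spmu: "space \<mu> = X" unfolding \<mu>_def using space_measure_of[OF PP] by simp
  have setsB: "sets (borel_of ?T) = sigma_sets X ?Op"
    unfolding borel_of_def topX using sets_measure_of[OF P] by simp
  have prob: "prob_space \<mu>"
  proof
    have "c i * of_nat (card (Orb i \<inter> X)) = ennreal ((1/2)^Suc i)" for i
    proof -
      have "Orb i \<inter> X = Orb i" using OX by auto
      moreover have "(1/2::real)^Suc i / real (card (Orb i)) * real (card (Orb i)) = (1/2)^Suc i"
        using Ocard[of i] by simp
      ultimately show ?thesis unfolding c_def
        by (simp add: ennreal_of_nat_eq_real_of_nat ennreal_mult[symmetric])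
    qed
    then have "f X = (\<Sum>i. ennreal ((1/2)^Suc i))" by (simp add: f_def)
    also have "\<dots> = ennreal (\<Sum>i. (1/2::real)^Suc i)"
      by (rule suminf_ennreal2) (use power_half_series in \<open>auto simp: sums_iff\<close>)
    also have "\<dots> = 1" using power_half_series sums_unique by fastforce
    finally show "emeasure \<mu> (space \<mu>) = 1" using em[of X] spmu sigma_sets_top by auto
  qed
  have inv: "emeasure \<mu> (shift G g ` B) = emeasure \<mu> B" if g: "g \<in> carrier G" and B: "B \<in> sets \<mu>" for g B
  proof -
    have B': "B \<in> sigma_sets X ?Op" using B setsmu by simp
    have BX: "B \<subseteq> X" using B' PP by auto
    have "card (Orb i \<inter> shift G g ` B) = card (Orb i \<inter> B)" for i
    proof -
      have "Orb i \<inter> shift G g ` B = shift G g ` (Orb i \<inter> B)"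
      proof (intro equalityI subsetI)
        fix x assume "x \<in> Orb i \<inter> shift G g ` B"
        then obtain b where b: "b \<in> B" "x = shift G g b" "shift G g b \<in> Orb i" by blast
        then have "b \<in> Orb i" using Oinv[OF g, of b i] BX by blast
        then show "x \<in> shift G g ` (Orb i \<inter> B)" using b by blast
      next
        fix x assume "x \<in> shift G g ` (Orb i \<inter> B)"
        then obtain b where b: "b \<in> B" "x = shift G g b" "b \<in> Orb i" by blast
        then have "shift G g b \<in> Orb i" using Oinv[OF g, of b i] BX by blast
        then show "x \<in> Orb i \<inter> shift G g ` B" using b by blast
      qed
      moreover have "inj_on (shift G g) (Orb i \<inter> B)" by (rule inj_on_subset[OF shift_bij(2)[OF g]]) (use BX in auto)
      ultimately show ?thesis by (simp add: card_image)
    qed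
    then have "f (shift G g ` B) = f B" by (simp add: f_def)
    then show ?thesis using em[OF B'] em[OF sigma_shift[OF B' g]] by simp
  qed
  have supp: "emeasure \<mu> U > 0" if U: "openin ?T U" "U \<noteq> {}" for U
  proof -
    obtain u where "u \<in> U" using U by blast
    then obtain d where "d \<in> D" "d \<in> U" using Ddense U by blast
    then obtain i where i: "zs i \<in> U" using rz by (metis imageE)
    have "card (Orb i \<inter> U) > 0" using i zsO Ofin card_gt_0_iff by blast
    moreover have "c i > 0" using Ocard[of i] unfolding c_def by simp
    ultimately have "0 < c i * of_nat (card (Orb i \<inter> U))" by (simp add: ennreal_zero_less_mult_iff)
    also have "\<dots> \<le> f U" unfolding f_def using sum_le_suminf[OF summableI, of "{i}"] by simp
    also have "\<dots> = emeasure \<mu> U" using em[of U] U by (auto intro: sigma_sets.Basic)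
    finally show ?thesis .
  qed
  show ?thesis using prob setsmu setsB inv supp by (intro exI[of _ \<mu>]) auto
qed

end

theorem corollary1p2:
  fixes G :: "('g, 'b) monoid_scheme" and A :: "'a set" and X :: "('g \<Rightarrow> 'a) set"
  assumes "group G" and "residually_finite G"
    and "finite A"
    and "subshift G A X" and "finite_type G A X" and "strongly_irreducible G X"
    and "\<exists>x\<in>X. periodic G x"
  shows "surjunctive G A X \<and> residually_finite (Aut G A X) \<and>
    (countable (carrier G) \<longrightarrow>
      (\<exists>\<mu>. prob_space \<mu> \<and> sets \<mu> = sets (borel_of (subtopology (prodiscrete G A) X)) \<and>
           (\<forall>g\<in>carrier G. \<forall>B\<in>sets \<mu>. emeasure \<mu> (shift G g ` B) = emeasure \<mu> B) \<and>
           (\<forall>U. openin (subtopology (prodiscrete G A) X) U \<and> U \<noteq> {} \<longrightarrow> emeasure \<mu> U > 0)))"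
proof -
  have "shsys G A X" unfolding shsys_def shsys_axioms_def using assms by auto
  then interpret S: shsys G A X .
  show ?thesis using S.surj S.Aut_rf S.measure_exists by blast
qed

end
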